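(* Let $E$ be a real Hilbert space with $\dim(E)\ge2$, $h\in E$ a unit vector, $H^+=\{x\in E\mid (h,x)>0\}$, and define $\preceq$ on $H^+$ by $x\preceq y\iff\|x-y_\perp\|\le y_h$. Then (a) every finite subset of $H^+$ has a right bound in $(H^+,\preceq)$; (b) a pair $x,y\in H^+$ has a left bound in $(H^+,\preceq)$ if and only if $\|x_\perp-y_\perp\|<x_h+y_h$.
   Context: For $x\in E$, $x_h=(h,x)$ and $x_\perp=x-(h,x)h$. A right bound of $P$ is an $s\in H^+$ with $p\preceq s$ for all $p\in P$; a left bound is an $s\in H^+$ with $s\preceq p$ for all $p\in P$. *)

theory Defs
  imports "HOL-Analysis.Analysis"
begin

definition hcomp :: "'a::real_inner \<Rightarrow> 'a \<Rightarrow> real" where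
  "hcomp h x = h \<bullet> x"

definition hperp :: "'a::real_inner \<Rightarrow> 'a \<Rightarrow> 'a" where
  "hperp h x = x - (h \<bullet> x) *\<^sub>R h"

definition Hplus :: "'a::real_inner \<Rightarrow> 'a set" where
  "Hplus h = {x. h \<bullet> x > 0}"

definition hprec :: "'a::real_inner \<Rightarrow> 'a \<Rightarrow> 'a \<Rightarrow> bool" where
  "hprec h x y \<longleftrightarrow> x \<in> Hplus h \<and> y \<in> Hplus h \<and> norm (x - hperp h y) \<le> hcomp h y"

definition right_bound :: "'a::real_inner \<Rightarrow> 'a set \<Rightarrow> 'a \<Rightarrow> bool" where
  "right_bound h P s \<longleftrightarrow> s \<in> Hplus h \<and> (\<forall>p\<in>P. hprec h p s)"

definition left_bound :: "'a::real_inner \<Rightarrow> 'a set \<Rightarrow> 'a \<Rightarrow> bool" where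
  "left_bound h P s \<longleftrightarrow> s \<in> Hplus h \<and> (\<forall>p\<in>P. hprec h s p)"

end

theory Submission
  imports Defs
begin

lemma hh: "norm (h::'a::real_inner) = 1 \<Longrightarrow> h \<bullet> h = 1"
  by (simp add: norm_eq_1)

lemma perp_orth: "norm (h::'a::real_inner) = 1 \<Longrightarrow> h \<bullet> hperp h x = 0"
  by (simp add: hperp_def inner_diff_right hh)

lemma pyth:
  assumes "norm (h::'a::real_inner) = 1" "h \<bullet> w = 0"
  shows "(norm (w + c *\<^sub>R h))\<^sup>2 = (norm w)\<^sup>2 + c\<^sup>2"
proof -
  have "(norm (w + c *\<^sub>R h))\<^sup>2 = (w + c *\<^sub>R h) \<bullet> (w + c *\<^sub>R h)"
    by (simp add: power2_norm_eq_inner)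
  also have "\<dots> = w \<bullet> w + 2 * c * (h \<bullet> w) + c * c * (h \<bullet> h)"
    by (simp add: inner_add_left inner_add_right inner_commute algebra_simps)
  finally show ?thesis using assms by (simp add: hh dot_square_norm power2_eq_square)
qed

lemma ident: "(e * r)\<^sup>2 + e\<^sup>2 * (1 - r\<^sup>2) = (e::real)\<^sup>2"
  by (simp add: power2_eq_square algebra_simps)

lemma decomp: "x = hperp h x + (h \<bullet> x) *\<^sub>R h"
  by (simp add: hperp_def)

lemma prec_strict:
  assumes u: "norm (h::'a::real_inner) = 1" and p: "hprec h s x"
  shows "norm (hperp h s - hperp h x) < hcomp h x"
proof -
  have c: "h \<bullet> s > 0" using p by (simp add: hprec_def Hplus_def)
  have a: "hcomp h x > 0" using p by (simp add: hprec_def Hplus_def hcomp_def)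
  have eq: "s - hperp h x = (hperp h s - hperp h x) + (h \<bullet> s) *\<^sub>R h"
    by (simp add: hperp_def algebra_simps)
  have o: "h \<bullet> (hperp h s - hperp h x) = 0"
    using u by (simp add: inner_diff_right perp_orth)
  have "(norm (s - hperp h x))\<^sup>2 = (norm (hperp h s - hperp h x))\<^sup>2 + (h \<bullet> s)\<^sup>2"
    unfolding eq by (rule pyth[OF u o])
  moreover have "(norm (s - hperp h x))\<^sup>2 \<le> (hcomp h x)\<^sup>2"
    using p by (simp add: hprec_def power_mono)
  ultimately have "(norm (hperp h s - hperp h x))\<^sup>2 < (hcomp h x)\<^sup>2"
    using c by (smt (verit) zero_less_power2)
  then show ?thesis using a by (smt (verit) power_mono norm_ge_zero)
qed

theorem mainTheorem18:
  fixes h :: "'a::{real_inner, complete_space}"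
  assumes dim2: "\<exists>u v::'a. u \<noteq> v \<and> independent {u, v}"
    and unit: "norm h = 1"
  shows "(\<forall>P. finite P \<and> P \<subseteq> Hplus h \<longrightarrow> (\<exists>s. right_bound h P s))
       \<and> (\<forall>x\<in>Hplus h. \<forall>y\<in>Hplus h.
            (\<exists>s. left_bound h {x, y} s) \<longleftrightarrow>
            norm (hperp h x - hperp h y) < hcomp h x + hcomp h y)"
proof (intro conjI allI impI ballI iffI)
  fix P :: "'a set"
  assume P: "finite P \<and> P \<subseteq> Hplus h"
  define R where "R = 1 + (\<Sum>p\<in>P. norm p)"
  have Rp: "R > 0" unfolding R_def by (smt (verit) sum_nonneg norm_ge_zero)
  have Rb: "norm p \<le> R" if "p \<in> P" for p
  proof -
    have "norm p \<le> (\<Sum>p\<in>P. norm p)"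
      using member_le_sum[of p P norm] P that by auto
    then show ?thesis unfolding R_def by simp
  qed
  have hR: "h \<bullet> (R *\<^sub>R h) = R" using unit by (simp add: hh)
  have pR: "hperp h (R *\<^sub>R h) = 0" using hR by (simp add: hperp_def)
  have sH: "R *\<^sub>R h \<in> Hplus h" using hR Rp by (simp add: Hplus_def)
  show "\<exists>s. right_bound h P s"
    apply (rule exI[of _ "R *\<^sub>R h"])
    using P sH Rb pR hR by (auto simp: right_bound_def hprec_def hcomp_def)
next
  fix x y assume x: "x \<in> Hplus h" and y: "y \<in> Hplus h"
  {
    assume "\<exists>s. left_bound h {x, y} s"
    then obtain s where s: "hprec h s x" "hprec h s y" by (auto simp: left_bound_def)
    have "norm (hperp h x - hperp h y) \<le> norm (hperp h s - hperp h x) + norm (hperp h s - hperp h y)"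
    proof -
      have "hperp h x - hperp h y = (hperp h x - hperp h s) + (hperp h s - hperp h y)" by simp
      then have "norm (hperp h x - hperp h y) \<le> norm (hperp h x - hperp h s) + norm (hperp h s - hperp h y)"
        by (metis norm_triangle_ineq)
      then show ?thesis by (simp add: norm_minus_commute)
    qed
    then show "norm (hperp h x - hperp h y) < hcomp h x + hcomp h y"
      using prec_strict[OF unit s(1)] prec_strict[OF unit s(2)] by linarith
  }
  assume d: "norm (hperp h x - hperp h y) < hcomp h x + hcomp h y"
  define a where "a = hcomp h x"
  define b where "b = hcomp h y"
  define dd where "dd = norm (hperp h x - hperp h y)"
  have a0: "a > 0" using x by (simp add: a_def hcomp_def Hplus_def)
  have b0: "b > 0" using y by (simp add: b_def hcomp_def Hplus_def)
  define r where "r = dd / (a + b)"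
  have r0: "r \<ge> 0" using a0 b0 by (simp add: r_def dd_def)
  have r1: "r < 1" using d a0 b0 by (simp add: r_def dd_def a_def b_def)
  define z where "z = hperp h x + (a / (a + b)) *\<^sub>R (hperp h y - hperp h x)"
  define m where "m = min a b"
  define c where "c = m * (1 - r)"
  have c0: "c > 0" using a0 b0 r1 by (simp add: c_def m_def)
  have zo: "h \<bullet> z = 0" using unit by (simp add: z_def inner_add_right inner_diff_right perp_orth)
  define s where "s = z + c *\<^sub>R h"
  have hs: "h \<bullet> s = c" using zo unit by (simp add: s_def inner_add_right hh)
  have sH: "s \<in> Hplus h" using hs c0 by (simp add: Hplus_def)
  have zx: "z - hperp h x = (a / (a + b)) *\<^sub>R (hperp h y - hperp h x)" by (simp add: z_def)
  have zy: "z - hperp h y = (b / (a + b)) *\<^sub>R (hperp h x - hperp h y)"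
  proof -
    have "z - hperp h y = (1 - a / (a + b)) *\<^sub>R (hperp h x - hperp h y)"
      by (simp add: z_def algebra_simps)
    moreover have "1 - a / (a + b) = b / (a + b)" using a0 b0 by (simp add: field_simps)
    ultimately show ?thesis by simp
  qed
  have nzx: "norm (z - hperp h x) = a * r"
    unfolding zx r_def dd_def using a0 b0 by (simp add: norm_minus_commute)
  have nzy: "norm (z - hperp h y) = b * r"
    unfolding zy r_def dd_def using a0 b0 by simp
  have c2: "c\<^sup>2 \<le> m\<^sup>2 * (1 - r\<^sup>2)"
  proof -
    have "(1 - r)\<^sup>2 \<le> 1 - r\<^sup>2" using r0 r1 by (simp add: power2_eq_square algebra_simps mult_left_le_one_le)
    then show ?thesis unfolding c_def by (simp add: power_mult_distrib mult_left_mono)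
  qed
  have key: "norm (s - hperp h w) \<le> e" if "e > 0" "m \<le> e" "norm (z - hperp h w) = e * r" for w e
  proof -
    have o: "h \<bullet> (z - hperp h w) = 0" using zo unit by (simp add: inner_diff_right perp_orth)
    have eqw: "s - hperp h w = (z - hperp h w) + c *\<^sub>R h" by (simp add: s_def algebra_simps)
    have "(norm (s - hperp h w))\<^sup>2 = (e * r)\<^sup>2 + c\<^sup>2" unfolding eqw using pyth[OF unit o, of c] that(3) by simp
    also have "\<dots> \<le> (e * r)\<^sup>2 + m\<^sup>2 * (1 - r\<^sup>2)" using c2 by simp
    also have "\<dots> \<le> (e * r)\<^sup>2 + e\<^sup>2 * (1 - r\<^sup>2)"
    proof -
      have "m\<^sup>2 \<le> e\<^sup>2" using that a0 b0 unfolding m_def by (intro power_mono) auto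
      moreover have "1 - r\<^sup>2 \<ge> 0" using r0 r1 by (simp add: abs_square_le_1)
      ultimately show ?thesis by (simp add: mult_right_mono)
    qed
    also have "\<dots> = e\<^sup>2" by (rule ident)
    finally show ?thesis using power2_le_imp_le[of "norm (s - hperp h w)" e] that(1) by simp
  qed
  have "norm (s - hperp h x) \<le> a" using key[of a x] a0 nzx by (simp add: m_def)
  moreover have "norm (s - hperp h y) \<le> b" using key[of b y] b0 nzy by (simp add: m_def)
  ultimately show "\<exists>s. left_bound h {x, y} s"
    using sH x y by (auto simp: left_bound_def hprec_def a_def b_def)
qed

end
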